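(* Consider the closed-loop data-generating system $$y_t = G(q)S(q) r_t + H(q)S(q) e_t,\qquad u_t = S(q) r_t - K(q)H(q)S(q) e_t,$$ where $q^{-1}$ is the delay operator, $e_t$ is Gaussian white noise with variance $\lambda_e$, $r_t$ is a known external reference signal (with spectrum $\Phi_r$) uncorrelated with $e_t$, $K(q)$ is a stabilizing regulator, $S(q)=[1+K(q)G(q)]^{-1}$, and $$G(q)=\frac{L(q)}{\Gamma(q)F(q)},\qquad H(q)=\frac{C(q)}{\Gamma(q)D(q)},$$ with $L(q)=l_1q^{-1}+\dots+l_{m_l}q^{-m_l}$, $\Gamma(q)=1+\gamma_1q^{-1}+\dots+\gamma_{m_\gamma}q^{-m_\gamma}$, $F(q)=1+f_1q^{-1}+\dots+f_{m_f}q^{-m_f}$, $C(q)=1+c_1q^{-1}+\dots+c_{m_c}q^{-m_c}$, $D(q)=1+d_1q^{-1}+\dots+d_{m_d}q^{-m_d}$ ($m_l,m_\gamma,m_f,m_c,m_d$ finite positive integers). Assume $C(q)$ and $D(q)$ are stable polynomials, $F(q)$ has no roots on the unit circle, $F(q)$ and $D(q)$ are co-prime, and $H(q)$ is stable and inversely stable. Factor $F(q)=F_s(q)F_a(q)$, where $F_s$ and $F_a$ are monic polynomials in $q^{-1}$ containing, respectively, the roots of $F$ of magnitude less than one and the roots of $F$ of magnitude larger than one; if $p_1,\dots,p_{n_a}$ are the roots of $F$ of magnitude larger than one, let $F_a^*(q)=\prod_{k=1}^{n_a}(1-p_k^{-1}q^{-1})$. Consider the cost $$J=\mathbb{E}\left[A(q)y_t-B(q)u_t\right]^2$$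 over infinite-order ARX polynomials $A(q)=1+\sum_{k=1}^\infty a_kq^{-k}$ and $B(q)=\sum_{k=1}^\infty b_kq^{-k}$. Then the minimizers of $J$ are $$\bar A(q)=\frac{1}{H(q)}\frac{F_a(q)}{F_a^*(q)}=\frac{\Gamma(q)D(q)}{C(q)}\frac{F_a(q)}{F_a^*(q)},\qquad \bar B(q)=\frac{1}{H(q)}\frac{L(q)}{\Gamma(q)F_s(q)F_a^*(q)}=\frac{D(q)}{C(q)}\frac{L(q)}{F_s(q)F_a^*(q)},$$ and the attained global minimum is $$J^\star=\left|\frac{F_a(e^{i\omega})}{F_a^*(e^{i\omega})}\right|^2\lambda_e.$$
   Context: A polynomial in $q^{-1}$ is called stable if all its roots (values of $q$ at which it vanishes) lie strictly inside the unit circle; a transfer function is stable (resp. inversely stable) if it (resp. its inverse) has all poles strictly inside the unit circle. Roots of magnitude larger than one are called anti-stable. *)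

theory Defs
  imports "HOL-Analysis.Analysis" "HOL-Computational_Algebra.Computational_Algebra"
begin

text \<open>Polynomials in the delay operator q^{-1} are represented as polynomials in the
  variable z = q^{-1}: the polynomial P(q) = p0 + p1 q^{-1} + ... is the Isabelle polynomial
  [:p0, p1, ...:], and its value at q is  poly P (inverse q).\<close>

abbreviation cpoly :: "real poly \<Rightarrow> complex poly" where
  "cpoly P \<equiv> map_poly complex_of_real P"

definition qeval :: "real poly \<Rightarrow> complex \<Rightarrow> complex" where
  "qeval P q = poly (cpoly P) (inverse q)"

definition qroots :: "complex poly \<Rightarrow> complex set" where
  "qroots P = {q. q \<noteq> 0 \<and> poly P (inverse q) = 0}"

definition stable_qpoly :: "complex poly \<Rightarrow> bool" where
  "stable_qpoly P \<longleftrightarrow> P \<noteq> 0 \<and> (\<forall>q\<in>qroots P. cmod q < 1)"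

text \<open>The rational transfer function N(q)/D(q) (N, D polynomials in q^{-1}) is stable:
  all its poles lie strictly inside the unit circle (it is causal, i.e. has no pole at
  q = infinity, and after cancellation its denominator is a stable polynomial).\<close>
definition tf_stable :: "complex poly \<Rightarrow> complex poly \<Rightarrow> bool" where
  "tf_stable N D \<longleftrightarrow> D \<noteq> 0 \<and>
     (\<exists>N' D'. N * D' = N' * D \<and> stable_qpoly D' \<and> poly D' 0 \<noteq> 0)"

definition tf_inv_stable :: "complex poly \<Rightarrow> complex poly \<Rightarrow> bool" where
  "tf_inv_stable N D \<longleftrightarrow> N \<noteq> 0 \<and> tf_stable D N"

text \<open>The regulator K = Kn/Kd (a proper rational transfer function) is stabilizing for the
  plant G = L/(Gamma F): the closed-loop characteristic polynomial
  Gamma F Kd + L Kn is stable.\<close>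
definition stabilizing :: "real poly \<Rightarrow> real poly \<Rightarrow> real poly \<Rightarrow> real poly \<Rightarrow> real poly \<Rightarrow> bool"
  where "stabilizing L Gm F Kn Kd \<longleftrightarrow>
     coeff Kd 0 \<noteq> 0 \<and> stable_qpoly (cpoly (Gm * F * Kd + L * Kn))"

text \<open>F_a^*(q) = prod_k (1 - p_k^{-1} q^{-1}) over the roots p_k of F_a (with multiplicity).
  A root p of F_a (in q) is a root z0 = 1/p in the variable z = q^{-1}, so the factor is
  1 - z0 z.\<close>
definition Fa_star :: "real poly \<Rightarrow> complex poly" where
  "Fa_star Fa = (\<Prod>z0\<in>{z. poly (cpoly Fa) z = 0}. [:1, - z0:] ^ order z0 (cpoly Fa))"

text \<open>Infinite-order ARX polynomials A(q) = sum_k a_k q^{-k}, given by coefficient sequences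
  (absolutely summable, so that A is defined for |q| >= 1).\<close>
definition arx_resp :: "(nat \<Rightarrow> real) \<Rightarrow> complex \<Rightarrow> complex" where
  "arx_resp a z = (\<Sum>k. complex_of_real (a k) * z ^ k)"

definition arx_A :: "(nat \<Rightarrow> real) \<Rightarrow> bool" where
  "arx_A a \<longleftrightarrow> a 0 = 1 \<and> summable (\<lambda>k. \<bar>a k\<bar>)"

definition arx_B :: "(nat \<Rightarrow> real) \<Rightarrow> bool" where
  "arx_B b \<longleftrightarrow> b 0 = 0 \<and> summable (\<lambda>k. \<bar>b k\<bar>)"

text \<open>Closed-loop transfer functions evaluated at q (z = q^{-1}):
  S = 1/(1+KG), G S, K S, and H.\<close>
definition cl_char :: "real poly \<Rightarrow> real poly \<Rightarrow> real poly \<Rightarrow> real poly \<Rightarrow> real poly \<Rightarrow> complex \<Rightarrow> complex"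
  where "cl_char L Gm F Kn Kd q = qeval Gm q * qeval F q * qeval Kd q + qeval L q * qeval Kn q"

definition tfS :: "real poly \<Rightarrow> real poly \<Rightarrow> real poly \<Rightarrow> real poly \<Rightarrow> real poly \<Rightarrow> complex \<Rightarrow> complex"
  where "tfS L Gm F Kn Kd q = qeval Gm q * qeval F q * qeval Kd q / cl_char L Gm F Kn Kd q"

definition tfGS :: "real poly \<Rightarrow> real poly \<Rightarrow> real poly \<Rightarrow> real poly \<Rightarrow> real poly \<Rightarrow> complex \<Rightarrow> complex"
  where "tfGS L Gm F Kn Kd q = qeval L q * qeval Kd q / cl_char L Gm F Kn Kd q"

definition tfKS :: "real poly \<Rightarrow> real poly \<Rightarrow> real poly \<Rightarrow> real poly \<Rightarrow> real poly \<Rightarrow> complex \<Rightarrow> complex"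
  where "tfKS L Gm F Kn Kd q = qeval Gm q * qeval F q * qeval Kn q / cl_char L Gm F Kn Kd q"

definition tfH :: "real poly \<Rightarrow> real poly \<Rightarrow> real poly \<Rightarrow> complex \<Rightarrow> complex"
  where "tfH C Gm D q = qeval C q / (qeval Gm q * qeval D q)"

text \<open>The cost J = E[A(q) y_t - B(q) u_t]^2 for the closed-loop system
  y = G S r + H S e,  u = S r - K H S e  (e white with variance lambda_e, r with spectrum
  Phi_r, uncorrelated), computed by Parseval's formula from the spectrum of A y - B u:
  J = 1/(2 pi) int_{-pi}^{pi} |A G S - B S|^2 Phi_r + |A H S + B K H S|^2 lambda_e d omega.\<close>
definition arx_cost ::
  "real poly \<Rightarrow> real poly \<Rightarrow> real poly \<Rightarrow> real poly \<Rightarrow> real poly \<Rightarrow> real poly \<Rightarrow> real poly \<Rightarrow>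
   real \<Rightarrow> (real \<Rightarrow> real) \<Rightarrow> (nat \<Rightarrow> real) \<Rightarrow> (nat \<Rightarrow> real) \<Rightarrow> real" where
  "arx_cost L Gm F C D Kn Kd lam Phi a b =
     (1 / (2 * pi)) * integral {-pi..pi} (\<lambda>w.
        let q = cis w; A = arx_resp a (inverse q); B = arx_resp b (inverse q);
            S = tfS L Gm F Kn Kd q; GS = tfGS L Gm F Kn Kd q;
            KS = tfKS L Gm F Kn Kd q; H = tfH C Gm D q
        in (cmod (A * GS - B * S))\<^sup>2 * Phi w + (cmod (A * H * S + B * H * KS))\<^sup>2 * lam)"

end

theory Submission
  imports Defs "HOL-Complex_Analysis.Complex_Analysis"
begin


definition psr :: "(complex \<Rightarrow> complex) \<Rightarrow> bool" where
 "psr f \<longleftrightarrow> (\<exists>c. summable (\<lambda>k. cmod (c k)) \<and> (\<forall>z. cmod z \<le> 1 \<longrightarrow> (\<lambda>k. c k * z^k) sums f z))"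


lemma psr_cong: "psr f \<Longrightarrow> (\<And>z. cmod z \<le> 1 \<Longrightarrow> f z = g z) \<Longrightarrow> psr g"
  unfolding psr_def by metis


lemma psr_poly: "psr (poly p)"
proof -
  have fin: "\<And>n. n \<notin> {..degree p} \<Longrightarrow> coeff p n = 0" by (simp add: coeff_eq_0)
  have "summable (\<lambda>k. cmod (coeff p k))"
    using sums_summable[OF sums_finite[of "{..degree p}" "\<lambda>k. cmod (coeff p k)"]] fin by auto
  moreover have "(\<lambda>k. coeff p k * z^k) sums poly p z" for z
  proof -
    have "(\<lambda>k. coeff p k * z^k) sums (\<Sum>k\<in>{..degree p}. coeff p k * z^k)"
      by (rule sums_finite) (auto simp: fin)
    thus ?thesis by (simp add: poly_altdef)
  qed
  ultimately show ?thesis unfolding psr_def by blast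
qed


lemma psr_const: "psr (\<lambda>z. c)"
  by (rule psr_cong[OF psr_poly[of "[:c:]"]]) simp


lemma psr_add: assumes "psr f" "psr g" shows "psr (\<lambda>z. f z + g z)"
proof -
  obtain c where c: "summable (\<lambda>k. cmod (c k))" "\<And>z. cmod z \<le> 1 \<Longrightarrow> (\<lambda>k. c k * z^k) sums f z"
    using assms(1) unfolding psr_def by blast
  obtain d where d: "summable (\<lambda>k. cmod (d k))" "\<And>z. cmod z \<le> 1 \<Longrightarrow> (\<lambda>k. d k * z^k) sums g z"
    using assms(2) unfolding psr_def by blast
  have "summable (\<lambda>k. cmod (c k + d k))"
    by (rule summable_comparison_test'[OF summable_add[OF c(1) d(1)]]) (simp add: norm_triangle_ineq)
  moreover have "(\<lambda>k. (c k + d k) * z^k) sums (f z + g z)" if "cmod z \<le> 1" for z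
  proof -
    have "(\<lambda>k. c k * z^k + d k * z^k) sums (f z + g z)" by (rule sums_add[OF c(2)[OF that] d(2)[OF that]])
    thus ?thesis by (simp add: distrib_right)
  qed
  ultimately show ?thesis unfolding psr_def by (intro exI[of _ "\<lambda>k. c k + d k"]) blast
qed

lemma psr_mult: assumes "psr f" "psr g" shows "psr (\<lambda>z. f z * g z)"
proof -
  obtain c where c: "summable (\<lambda>k. cmod (c k))" "\<And>z. cmod z \<le> 1 \<Longrightarrow> (\<lambda>k. c k * z^k) sums f z"
    using assms(1) unfolding psr_def by blast
  obtain d where d: "summable (\<lambda>k. cmod (d k))" "\<And>z. cmod z \<le> 1 \<Longrightarrow> (\<lambda>k. d k * z^k) sums g z"
    using assms(2) unfolding psr_def by blast
  define e where "e k = (\<Sum>i\<le>k. c i * d (k - i))" for k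
  have s1: "(\<lambda>k. \<Sum>i\<le>k. cmod (c i) * cmod (d (k - i))) sums ((\<Sum>k. cmod (c k)) * (\<Sum>k. cmod (d k)))"
    by (rule Cauchy_product_sums) (use c(1) d(1) in auto)
  have "summable (\<lambda>k. cmod (e k))"
  proof (rule summable_comparison_test[OF _ sums_summable[OF s1]])
    show "\<exists>N. \<forall>n\<ge>N. norm (cmod (e n)) \<le> (\<Sum>i\<le>n. cmod (c i) * cmod (d (n - i)))"
      unfolding e_def by (auto intro!: order.trans[OF norm_sum] simp: norm_mult)
  qed
  moreover have "(\<lambda>k. e k * z^k) sums (f z * g z)" if z: "cmod z \<le> 1" for z
  proof -
    have nz: "\<And>k. cmod (z^k) \<le> 1" using z by (simp add: norm_power power_le_one)
    have sa: "summable (\<lambda>k. norm (c k * z^k))"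
      by (rule summable_comparison_test'[OF c(1)]) (auto simp: norm_mult intro: mult_left_le[OF nz])
    have sb: "summable (\<lambda>k. norm (d k * z^k))"
      by (rule summable_comparison_test'[OF d(1)]) (auto simp: norm_mult intro: mult_left_le[OF nz])
    have "(\<lambda>k. \<Sum>i\<le>k. (c i * z^i) * (d (k - i) * z^(k-i))) sums ((\<Sum>k. c k * z^k) * (\<Sum>k. d k * z^k))"
      by (rule Cauchy_product_sums[OF sa sb])
    moreover have "(\<Sum>k. c k * z^k) = f z" "(\<Sum>k. d k * z^k) = g z"
      using c(2)[OF z] d(2)[OF z] by (auto simp: sums_iff)
    moreover have "(\<Sum>i\<le>k. (c i * z^i) * (d (k - i) * z^(k-i))) = e k * z^k" for k
    proof -
      have "(\<Sum>i\<le>k. (c i * z^i) * (d (k - i) * z^(k-i))) = (\<Sum>i\<le>k. c i * d (k - i) * z^k)"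
        by (intro sum.cong refl) (simp add: power_add[symmetric] algebra_simps)
      thus ?thesis by (simp add: e_def sum_distrib_right)
    qed
    ultimately show ?thesis by simp
  qed
  ultimately show ?thesis unfolding psr_def by blast
qed


lemma psr_arx: assumes "summable (\<lambda>k. \<bar>a k\<bar>)" shows "psr (arx_resp a)"
proof -
  have "summable (\<lambda>k. cmod (complex_of_real (a k)))" using assms by simp
  moreover have "(\<lambda>k. complex_of_real (a k) * z^k) sums arx_resp a z" if z: "cmod z \<le> 1" for z
  proof -
    have nz: "\<And>k. cmod (z^k) \<le> 1" using z by (simp add: norm_power power_le_one)
    have b: "norm (complex_of_real (a k) * z^k) \<le> \<bar>a k\<bar>" for k
    proof -
      have "\<bar>a k\<bar> * cmod (z^k) \<le> \<bar>a k\<bar>" by (rule mult_left_le[OF nz]) simp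
      thus ?thesis by (simp add: norm_mult)
    qed
    have "summable (\<lambda>k. norm (complex_of_real (a k) * z^k))"
      by (rule summable_comparison_test'[OF assms]) (use b in simp)
    hence "summable (\<lambda>k. complex_of_real (a k) * z^k)" by (rule summable_norm_cancel)
    thus ?thesis unfolding arx_resp_def by (rule summable_sums)
  qed
  ultimately show ?thesis unfolding psr_def by (intro exI[of _ "\<lambda>k. complex_of_real (a k)"]) blast
qed

lemma psr_at0: assumes "summable (\<lambda>k. cmod (c k))" "\<forall>z. cmod z \<le> 1 \<longrightarrow> (\<lambda>k. c k * z^k) sums f z"
  shows "f 0 = c 0"
proof -
  have "cmod (0::complex) \<le> 1" by simp
  with assms(2) have "(\<lambda>k. c k * 0^k) sums f 0" by blast
  moreover have "(\<lambda>k. c k * 0^k) = (\<lambda>r. if r = 0 then c r else 0)"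
    by (auto simp: fun_eq_iff power_0_left)
  hence "(\<lambda>k. c k * 0^k) sums c 0" using sums_single[of 0 c] by simp
  ultimately show ?thesis by (metis sums_unique2)
qed


lemma psr_cont: assumes "psr f" shows "continuous_on (cball 0 1) f"
proof -
  obtain c where c: "summable (\<lambda>k. cmod (c k))" "\<And>z. cmod z \<le> 1 \<Longrightarrow> (\<lambda>k. c k * z^k) sums f z"
    using assms unfolding psr_def by blast
  have bnd: "norm (c n * x^n) \<le> cmod (c n)" if "x \<in> cball 0 1" for n x
  proof -
    have "cmod (x^n) \<le> 1" using that by (simp add: norm_power power_le_one)
    hence "cmod (c n) * cmod (x^n) \<le> cmod (c n)" by (rule mult_left_le) simp
    thus ?thesis by (simp add: norm_mult)
  qed
  have u: "uniform_limit (cball 0 1) (\<lambda>n x. \<Sum>i<n. c i * x^i) (\<lambda>x. suminf (\<lambda>i. c i * x^i)) sequentially"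
    by (rule Weierstrass_m_test[OF bnd c(1)])
  have cn: "\<forall>\<^sub>F n in sequentially. continuous_on (cball 0 1) (\<lambda>x. \<Sum>i<n. c i * x^i)"
    by (intro always_eventually allI continuous_intros)
  have "continuous_on (cball 0 1) (\<lambda>x. suminf (\<lambda>i. c i * x^i))"
    by (rule uniform_limit_theorem[OF cn u trivial_limit_sequentially])
  moreover have eq: "suminf (\<lambda>i. c i * x^i) = f x" if "x \<in> cball 0 1" for x
    using c(2)[of x] that by (simp add: sums_iff)
  have "continuous_on (cball 0 1) (\<lambda>x. suminf (\<lambda>i. c i * x^i)) = continuous_on (cball 0 1) f"
    by (rule continuous_on_cong[OF refl eq])
  ultimately show ?thesis by simp
qed
lemma cis_pow_integral:
  "((\<lambda>w. cis (-w) ^ k) has_integral (if k = 0 then 2 * pi else 0)) {-pi..pi}"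
proof (cases "k = 0")
  case True
  then show ?thesis using has_integral_const_real[of "1::complex" "-pi" pi] by (simp add: scaleR_conv_of_real)
next
  case False
  have eq: "cis (-w) ^ k = cis (- (real k * w))" for w by (subst Complex.DeMoivre) simp
  define F where "F w = cis (- (real k * w)) * (\<i> / of_nat k)" for w
  have "((\<lambda>w. cis (- (real k * w))) has_integral (F pi - F (-pi))) {-pi..pi}"
  proof (rule fundamental_theorem_of_calculus)
    fix x :: real assume "x \<in> {-pi..pi}"
    have "((\<lambda>w. cis (- (real k * w))) has_derivative (\<lambda>t. (- (real k * t)) *\<^sub>R (\<i> * cis (- (real k * x))))) (at x within {-pi..pi})"
      by (rule has_derivative_cis) (auto intro!: derivative_eq_intros)
    hence "(F has_derivative (\<lambda>t. ((- (real k * t)) *\<^sub>R (\<i> * cis (- (real k * x)))) * (\<i> / of_nat k))) (at x within {-pi..pi})"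
      unfolding F_def by (intro derivative_eq_intros) auto
    moreover have "(\<lambda>t. ((- (real k * t)) *\<^sub>R (\<i> * cis (- (real k * x)))) * (\<i> / of_nat k)) = (\<lambda>t. t *\<^sub>R cis (- (real k * x)))"
      using False by (auto simp: scaleR_conv_of_real field_simps)
    ultimately show "(F has_vector_derivative cis (- (real k * x))) (at x within {-pi..pi})"
      unfolding has_vector_derivative_def by simp
  qed simp
  moreover have "F pi - F (-pi) = 0"
  proof -
    have "cis (- (real k * pi)) = cis (- (real k * - pi))"
      by (simp add: complex_eq_iff sin_npi)
    thus ?thesis unfolding F_def by simp
  qed
  ultimately show ?thesis using False by (simp add: eq)
qed


lemma psr_mean: fixes f :: "complex \<Rightarrow> complex" assumes "psr f" shows "((\<lambda>w. f (cis (-w))) has_integral (2 * pi * f 0)) {-pi..pi}"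
proof -
  obtain c where c: "summable (\<lambda>k. cmod (c k))" "\<And>z. cmod z \<le> 1 \<Longrightarrow> (\<lambda>k. c k * z^k) sums f z"
    using assms unfolding psr_def by blast
  have f0: "f 0 = c 0" using psr_at0 c by blast
  have bnd: "norm (c n * cis (-w)^n) \<le> cmod (c n)" for n w
    by (simp add: norm_mult norm_power)
  have u: "uniform_limit {-pi..pi} (\<lambda>n w. \<Sum>i<n. c i * cis (-w)^i) (\<lambda>w. suminf (\<lambda>i. c i * cis (-w)^i)) sequentially"
    by (rule Weierstrass_m_test[OF bnd c(1)])
  have cont: "continuous_on {-pi..pi} (\<lambda>w. \<Sum>i<n. c i * cis (-w)^i)" for n
    by (intro continuous_on_sum continuous_on_mult continuous_on_const continuous_on_power continuous_on_cis continuous_on_minus continuous_on_id)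
  obtain I J where IJ: "\<And>n. ((\<lambda>w. \<Sum>i<n. c i * cis (-w)^i) has_integral I n) {-pi..pi}"
    "((\<lambda>w. suminf (\<lambda>i. c i * cis (-w)^i)) has_integral J) {-pi..pi}" "I \<longlonglongrightarrow> J"
    using uniform_limit_integral[OF u cont trivial_limit_sequentially] by blast
  have In: "I n = 2 * pi * c 0" if "n \<ge> 1" for n
  proof -
    have "((\<lambda>w. c i * cis (-w)^i) has_integral (c i * (if i = 0 then 2 * pi else 0))) {-pi..pi}" for i
      by (rule has_integral_mult_right[OF cis_pow_integral])
    hence "((\<lambda>w. \<Sum>i<n. c i * cis (-w)^i) has_integral (\<Sum>i<n. c i * (if i = 0 then 2 * pi else 0))) {-pi..pi}"
      by (intro has_integral_sum) simp_all
    moreover have "(\<Sum>i<n. c i * complex_of_real (if i = 0 then 2 * pi else 0)) = (\<Sum>i<n. if i = 0 then c i * (2 * pi) else 0)"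
      by (intro sum.cong) auto
    moreover have "\<dots> = c 0 * (2 * pi)" using that by (subst sum.delta) auto
    ultimately have "((\<lambda>w. \<Sum>i<n. c i * cis (-w)^i) has_integral (c 0 * (2 * pi))) {-pi..pi}" by metis
    thus ?thesis using IJ(1)[of n] has_integral_unique by (metis mult.commute)
  qed
  have "(\<lambda>n. I n) \<longlonglongrightarrow> 2 * pi * c 0"
    by (rule tendsto_eventually) (use In in \<open>auto simp: eventually_sequentially\<close>)
  hence J: "J = 2 * pi * c 0" using IJ(3) LIMSEQ_unique by blast
  have "suminf (\<lambda>i. c i * cis (-w)^i) = f (cis (-w))" for w
    using c(2)[of "cis (-w)"] by (simp add: sums_iff)
  hence "((\<lambda>w. f (cis (-w))) has_integral J) {-pi..pi}" using IJ(2) by simp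
  thus ?thesis using J f0 by simp
qed



lemma cpoly_mult: "cpoly (p * q) = cpoly p * cpoly q"
  by (intro poly_eqI) (simp add: coeff_map_poly coeff_mult)

lemma cpoly_add: "cpoly (p + q) = cpoly p + cpoly q"
  by (intro poly_eqI) (simp add: coeff_map_poly)

lemma coeff_cpoly: "coeff (cpoly p) n = complex_of_real (coeff p n)"
  by (simp add: coeff_map_poly)

lemma poly_cpoly_0: "poly (cpoly p) 0 = complex_of_real (coeff p 0)"
  by (simp add: poly_0_coeff_0 coeff_cpoly)

lemma poly_cpoly_cnj: "poly (cpoly p) (cnj z) = cnj (poly (cpoly p) z)"
  by (rule poly_cnj_real[symmetric]) (simp add: coeff_cpoly)

lemma rat_ps_real:
  fixes P Q :: "real poly"
  assumes Q: "\<forall>z. cmod z \<le> 1 \<longrightarrow> poly (cpoly Q) z \<noteq> 0"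
  shows "\<exists>a::nat\<Rightarrow>real. summable (\<lambda>k. \<bar>a k\<bar>) \<and>
     (\<forall>z. cmod z \<le> 1 \<longrightarrow> (\<lambda>k. complex_of_real (a k) * z^k) sums (poly (cpoly P) z / poly (cpoly Q) z))"
proof -
  define Z where "Z = {z. poly (cpoly Q) z = 0}"
  have Q0: "cpoly Q \<noteq> 0" using Q[rule_format, of 0] by auto
  hence finZ: "finite Z" unfolding Z_def by (rule poly_roots_finite)
  have Zgt: "\<And>z. z \<in> Z \<Longrightarrow> cmod z > 1" using Q unfolding Z_def by force
  obtain r where r: "r > 1" "\<And>z. cmod z < r \<Longrightarrow> poly (cpoly Q) z \<noteq> 0"
  proof (cases "Z = {}")
    case True
    then show ?thesis using that[of 2] unfolding Z_def by auto
  next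
    case False
    define r where "r = Min (cmod ` Z)"
    have "r \<in> cmod ` Z" unfolding r_def using False finZ by auto
    hence "r > 1" using Zgt by auto
    moreover have "cmod z < r \<Longrightarrow> poly (cpoly Q) z \<noteq> 0" for z
    proof
      assume "cmod z < r" "poly (cpoly Q) z = 0"
      hence "z \<in> Z" unfolding Z_def by auto
      hence "r \<le> cmod z" unfolding r_def using finZ by auto
      thus False using \<open>cmod z < r\<close> by simp
    qed
    ultimately show ?thesis using that by blast
  qed
  define f where "f z = poly (cpoly P) z / poly (cpoly Q) z" for z
  have hol: "f holomorphic_on ball 0 r"
    unfolding f_def using r(2) by (intro holomorphic_intros) auto
  define c where "c n = (deriv ^^ n) f 0 / fact n" for n
  have ser: "(\<lambda>n. c n * w^n) sums f w" if "cmod w < r" for w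
    using holomorphic_power_series[OF hol, of w] that by (simp add: c_def)
  define \<rho> where "\<rho> = (1 + r) / 2"
  have \<rho>: "1 < \<rho>" "\<rho> < r" using r(1) by (simp_all add: \<rho>_def)
  have "cmod (complex_of_real \<rho>) < r" using \<rho> by simp
  hence "summable (\<lambda>n. c n * (complex_of_real \<rho>)^n)" by (rule sums_summable[OF ser])
  moreover have "norm (1::complex) < norm (complex_of_real \<rho>)" using \<rho> by simp
  ultimately have sc: "summable (\<lambda>n. norm (c n * 1^n))"
    by (rule powser_insidea)
  define a where "a n = Re (c n)" for n
  have "summable (\<lambda>k. \<bar>a k\<bar>)"
    by (rule summable_comparison_test'[OF sc]) (auto simp: a_def abs_Re_le_cmod)
  moreover have "(\<lambda>k. complex_of_real (a k) * z^k) sums f z" if z: "cmod z \<le> 1" for z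
  proof -
    have s1: "(\<lambda>n. c n * z^n) sums f z" using ser z r(1) by simp
    have "(\<lambda>n. c n * (cnj z)^n) sums f (cnj z)" using ser z r(1) by simp
    hence "(\<lambda>n. cnj (c n * (cnj z)^n)) sums cnj (f (cnj z))" by (simp only: sums_cnj)
    moreover have "cnj (f (cnj z)) = f z" unfolding f_def by (simp add: poly_cpoly_cnj)
    ultimately have s2: "(\<lambda>n. cnj (c n) * z^n) sums f z" by simp
    have "(\<lambda>n. (c n * z^n + cnj (c n) * z^n) / 2) sums ((f z + f z) / 2)"
      by (intro sums_divide sums_add s1 s2)
    moreover have "(c n * z^n + cnj (c n) * z^n) / 2 = complex_of_real (a n) * z^n" for n
    proof -
      have "c n + cnj (c n) = 2 * complex_of_real (a n)" unfolding a_def by (simp add: complex_add_cnj)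
      hence "(c n * z^n + cnj (c n) * z^n) / 2 = (2 * complex_of_real (a n)) * z^n / 2"
        by (metis distrib_right)
      thus ?thesis by simp
    qed
    ultimately show ?thesis by simp
  qed
  ultimately show ?thesis unfolding f_def by (intro exI[of _ a]) blast
qed



lemma cpoly_smult: "cpoly (smult c p) = smult (complex_of_real c) (cpoly p)"
  by (intro poly_eqI) (simp add: coeff_cpoly)

lemma degree_cpoly: "degree (cpoly p) = degree p"
  by (rule degree_map_poly) simp

lemma cpoly_reflect: "cpoly (reflect_poly p) = reflect_poly (cpoly p)"
  by (intro poly_eqI) (simp add: coeff_cpoly coeff_reflect_poly degree_cpoly)

lemma lead_coeff_cpoly: "lead_coeff (cpoly p) = complex_of_real (lead_coeff p)"
  by (simp add: coeff_cpoly degree_cpoly)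

lemma inverse_unit_cnj: "cmod z = 1 \<Longrightarrow> inverse z = cnj z"
proof -
  assume "cmod z = 1"
  hence "z * cnj z = 1" using complex_norm_square[of z] by simp
  thus ?thesis by (rule inverse_unique)
qed

lemma Fa_star_facts:
  fixes Fa :: "real poly"
  assumes Fa0: "coeff Fa 0 = 1" and Fa_roots: "\<forall>q\<in>qroots (cpoly Fa). cmod q > 1"
  shows "\<forall>z. poly (Fa_star Fa) z = poly (cpoly (smult (1 / lead_coeff Fa) (reflect_poly Fa))) z"
    and "\<forall>z. cmod z \<le> 1 \<longrightarrow> poly (Fa_star Fa) z \<noteq> 0"
    and "poly (Fa_star Fa) 0 = 1"
    and "\<forall>z. cmod z = 1 \<longrightarrow> cmod (poly (cpoly Fa) z / poly (Fa_star Fa) z) = \<bar>lead_coeff Fa\<bar>"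
proof -
  define FC where "FC = cpoly Fa"
  define Zs where "Zs = {z. poly FC z = 0}"
  have FC0: "poly FC 0 = 1" unfolding FC_def by (simp add: poly_cpoly_0 Fa0)
  hence FCnz: "FC \<noteq> 0" by auto
  have finZ: "finite Zs" unfolding Zs_def using FCnz by (rule poly_roots_finite)
  have rt: "z0 \<noteq> 0 \<and> cmod z0 < 1" if "z0 \<in> Zs" for z0
  proof -
    have z0: "poly FC z0 = 0" using that Zs_def by auto
    hence "z0 \<noteq> 0" using FC0 by auto
    hence "inverse z0 \<in> qroots (cpoly Fa)" using z0 unfolding qroots_def FC_def by simp
    hence "cmod (inverse z0) > 1" using Fa_roots by blast
    hence "1 < 1 / cmod z0" by (simp add: norm_inverse divide_inverse)
    hence "cmod z0 < 1" using \<open>z0 \<noteq> 0\<close> by (simp add: field_simps)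
    with \<open>z0 \<noteq> 0\<close> show ?thesis by simp
  qed
  have FS: "poly (Fa_star Fa) z = (\<Prod>z0\<in>Zs. (1 - z0 * z) ^ order z0 FC)" for z
    unfolding Fa_star_def Zs_def FC_def by (simp add: poly_prod mult.commute)
  show nz: "\<forall>z. cmod z \<le> 1 \<longrightarrow> poly (Fa_star Fa) z \<noteq> 0"
  proof (intro allI impI)
    fix z :: complex assume z: "cmod z \<le> 1"
    have "1 - z0 * z \<noteq> 0" if "z0 \<in> Zs" for z0
    proof
      assume "1 - z0 * z = 0"
      hence "cmod (z0 * z) = 1" by (metis eq_iff_diff_eq_0 norm_one)
      moreover have "cmod (z0 * z) < 1"
      proof -
        have "cmod (z0 * z) = cmod z0 * cmod z" by (simp add: norm_mult)
        also have "\<dots> \<le> cmod z0 * 1" by (rule mult_left_mono) (use z in auto)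
        also have "\<dots> < 1" using rt[OF that] by simp
        finally show ?thesis .
      qed
      ultimately show False by simp
    qed
    thus "poly (Fa_star Fa) z \<noteq> 0" unfolding FS using finZ by (simp add: prod_zero_iff)
  qed
  show F0: "poly (Fa_star Fa) 0 = 1" unfolding FS by simp
  have lcC: "lead_coeff FC = complex_of_real (lead_coeff Fa)" unfolding FC_def by (rule lead_coeff_cpoly)
  have lcnz: "lead_coeff Fa \<noteq> 0" using FCnz FC_def by auto
  have dec: "smult (lead_coeff FC) (\<Prod>z\<in>Zs. [:-z, 1:] ^ order z FC) = FC"
    unfolding Zs_def by (rule complex_poly_decompose)
  have degFC: "degree FC = (\<Sum>z0\<in>Zs. order z0 FC)"
  proof -
    have "degree FC = degree (\<Prod>z\<in>Zs. [:-z, 1:] ^ order z FC)"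
      using dec lcnz lcC by (metis degree_smult_eq of_real_eq_0_iff)
    also have "\<dots> = (\<Sum>z\<in>Zs. degree ([:-z, 1:] ^ order z FC))"
      by (rule degree_prod_eq_sum_degree) auto
    also have "\<dots> = (\<Sum>z0\<in>Zs. order z0 FC)" by (simp add: degree_linear_power)
    finally show ?thesis .
  qed
  have key: "z ^ degree FC * poly FC (inverse z) = lead_coeff FC * poly (Fa_star Fa) z" if "z \<noteq> 0" for z
  proof -
    have "poly FC (inverse z) = lead_coeff FC * (\<Prod>z0\<in>Zs. (inverse z - z0) ^ order z0 FC)"
      by (subst dec[symmetric]) (simp add: poly_prod)
    hence "z ^ degree FC * poly FC (inverse z) = lead_coeff FC * ((\<Prod>z0\<in>Zs. z ^ order z0 FC) * (\<Prod>z0\<in>Zs. (inverse z - z0) ^ order z0 FC))"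
      by (simp add: degFC power_sum)
    also have "\<dots> = lead_coeff FC * (\<Prod>z0\<in>Zs. (z * (inverse z - z0)) ^ order z0 FC)"
      by (simp add: prod.distrib[symmetric] power_mult_distrib)
    also have "\<dots> = lead_coeff FC * (\<Prod>z0\<in>Zs. (1 - z0 * z) ^ order z0 FC)"
      using that by (simp add: algebra_simps)
    finally show ?thesis using FS by simp
  qed
  show eqR: "\<forall>z. poly (Fa_star Fa) z = poly (cpoly (smult (1 / lead_coeff Fa) (reflect_poly Fa))) z"
  proof
    fix z :: complex
    show "poly (Fa_star Fa) z = poly (cpoly (smult (1 / lead_coeff Fa) (reflect_poly Fa))) z"
    proof (cases "z = 0")
      case True
      then show ?thesis using F0 lcnz by (simp add: poly_cpoly_0)
    next
      case False
      have "poly (cpoly (smult (1 / lead_coeff Fa) (reflect_poly Fa))) z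
          = (1 / complex_of_real (lead_coeff Fa)) * (z ^ degree FC * poly FC (inverse z))"
        using False by (simp add: cpoly_smult cpoly_reflect poly_reflect_poly_nz FC_def)
      also have "\<dots> = poly (Fa_star Fa) z" using key[OF False] lcC lcnz by simp
      finally show ?thesis by simp
    qed
  qed
  show "\<forall>z. cmod z = 1 \<longrightarrow> cmod (poly (cpoly Fa) z / poly (Fa_star Fa) z) = \<bar>lead_coeff Fa\<bar>"
  proof (intro allI impI)
    fix z :: complex assume z: "cmod z = 1"
    hence z0: "z \<noteq> 0" by auto
    have "cmod (poly (Fa_star Fa) z) * \<bar>lead_coeff Fa\<bar> = cmod (z ^ degree FC * poly FC (inverse z))"
      using key[OF z0] lcC by (simp add: norm_mult)
    also have "\<dots> = cmod (poly FC z)"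
      using z by (simp add: norm_mult norm_power inverse_unit_cnj FC_def poly_cpoly_cnj)
    finally have e: "cmod (poly (Fa_star Fa) z) * \<bar>lead_coeff Fa\<bar> = cmod (poly FC z)" .
    have "poly (Fa_star Fa) z \<noteq> 0" using nz z by simp
    thus "cmod (poly (cpoly Fa) z / poly (Fa_star Fa) z) = \<bar>lead_coeff Fa\<bar>"
      using e by (simp add: norm_divide FC_def field_simps)
  qed
qed



lemma roots_nz:
  assumes "\<forall>q\<in>qroots (cpoly P). cmod q < 1" "coeff P 0 \<noteq> 0"
  shows "\<forall>z. cmod z \<le> 1 \<longrightarrow> poly (cpoly P) z \<noteq> 0"
proof (intro allI impI notI)
  fix z :: complex assume z: "cmod z \<le> 1" and p: "poly (cpoly P) z = 0"
  show False
  proof (cases "z = 0")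
    case True then show ?thesis using p assms(2) by (simp add: poly_cpoly_0)
  next
    case False
    hence "inverse z \<in> qroots (cpoly P)" using p unfolding qroots_def by simp
    hence "cmod (inverse z) < 1" using assms(1) by blast
    moreover have "cmod (inverse z) \<ge> 1" using z False by (simp add: norm_inverse one_le_inverse)
    ultimately show False by simp
  qed
qed

lemma stable_nz:
  assumes "stable_qpoly (cpoly P)" "coeff P 0 \<noteq> 0"
  shows "\<forall>z. cmod z \<le> 1 \<longrightarrow> poly (cpoly P) z \<noteq> 0"
  using roots_nz[of P] assms unfolding stable_qpoly_def by blast

lemma Gm_circle:
  assumes H: "tf_stable (cpoly C) (cpoly (Gm * D))"
    and Cnz: "\<forall>z. cmod z \<le> 1 \<longrightarrow> poly (cpoly C) z \<noteq> 0"
  shows "\<forall>z. cmod z = 1 \<longrightarrow> poly (cpoly Gm) z \<noteq> 0"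
proof (intro allI impI notI)
  fix z :: complex assume z: "cmod z = 1" and g: "poly (cpoly Gm) z = 0"
  obtain N' D' where ND: "cpoly C * D' = N' * cpoly (Gm * D)" "stable_qpoly D'"
    using H unfolding tf_stable_def by blast
  have "poly (cpoly C * D') z = poly (N' * cpoly (Gm * D)) z" using ND(1) by simp
  hence "poly (cpoly C) z * poly D' z = 0" using g by (simp add: cpoly_mult)
  hence "poly D' z = 0" using Cnz z by simp
  moreover have "z \<noteq> 0" using z by auto
  ultimately have "inverse z \<in> qroots D'" unfolding qroots_def by simp
  hence "cmod (inverse z) < 1" using ND(2) unfolding stable_qpoly_def by blast
  thus False using z by (simp add: norm_inverse)
qed

lemma arx_resp_0: "arx_resp a 0 = complex_of_real (a 0)"
proof -
  have "(\<lambda>k. complex_of_real (a k) * 0^k) = (\<lambda>k. if k = 0 then complex_of_real (a k) else 0)"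
    by (auto simp: fun_eq_iff power_0_left)
  hence "(\<lambda>k. complex_of_real (a k) * 0^k) sums complex_of_real (a 0)"
    using sums_single[of 0 "\<lambda>k. complex_of_real (a k)"] by simp
  thus ?thesis unfolding arx_resp_def by (simp add: sums_iff)
qed

lemma cmod_sq_ge: "cmod u ^ 2 \<ge> 2 * Re u - 1"
proof -
  have "0 \<le> (Re u - 1)^2 + (Im u)^2" by simp
  thus ?thesis using cmod_power2[of u] by (simp add: power2_eq_square algebra_simps)
qed

lemma rat_psr:
  fixes P Q :: "real poly"
  assumes "\<forall>z. cmod z \<le> 1 \<longrightarrow> poly (cpoly Q) z \<noteq> 0"
  shows "psr (\<lambda>z. poly (cpoly P) z / poly (cpoly Q) z)"
proof -
  obtain a :: "nat \<Rightarrow> real" where a: "summable (\<lambda>k. \<bar>a k\<bar>)"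
     "\<forall>z. cmod z \<le> 1 \<longrightarrow> (\<lambda>k. complex_of_real (a k) * z^k) sums (poly (cpoly P) z / poly (cpoly Q) z)"
    using rat_ps_real[OF assms] by blast
  have "summable (\<lambda>k. cmod (complex_of_real (a k)))" using a(1) by simp
  thus ?thesis unfolding psr_def using a(2) by (intro exI[of _ "\<lambda>k. complex_of_real (a k)"]) blast
qed

lemma cont_on_circle:
  fixes X :: "complex \<Rightarrow> real"
  assumes "continuous_on (cball 0 1) X"
  shows "continuous_on {-pi..pi} (\<lambda>w. X (cis (-w)))"
proof -
  have "continuous_on {-pi..pi} (\<lambda>w. cis (-w))" by (intro continuous_intros)
  moreover have "(\<lambda>w. cis (-w)) ` {-pi..pi} \<subseteq> cball 0 1" by auto
  ultimately show ?thesis using continuous_on_compose2[OF assms] by blast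
qed

lemma cont_on_circle_c:
  fixes X :: "complex \<Rightarrow> complex"
  assumes "continuous_on (cball 0 1) X"
  shows "continuous_on {-pi..pi} (\<lambda>w. X (cis (-w)))"
proof -
  have "continuous_on {-pi..pi} (\<lambda>w. cis (-w))" by (intro continuous_intros)
  moreover have "(\<lambda>w. cis (-w)) ` {-pi..pi} \<subseteq> cball 0 1" by auto
  ultimately show ?thesis using continuous_on_compose2[OF assms] by blast
qed

lemma prod_integrable:
  fixes X Phi :: "real \<Rightarrow> real"
  assumes "continuous_on {-pi..pi} X" "Phi absolutely_integrable_on {-pi..pi}"
  shows "(\<lambda>w. X w * Phi w) integrable_on {-pi..pi}"
proof -
  have "X \<in> borel_measurable (lebesgue_on {-pi..pi})"
    by (rule continuous_imp_measurable_on_sets_lebesgue[OF assms(1)]) simp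
  moreover have "bounded (X ` {-pi..pi})"
    by (rule compact_imp_bounded[OF compact_continuous_image[OF assms(1)]]) simp
  ultimately have "(\<lambda>w. X w * Phi w) absolutely_integrable_on {-pi..pi}"
    using absolutely_integrable_bounded_measurable_product_real[of X "{-pi..pi}" Phi] assms(2) by simp
  thus ?thesis using absolutely_integrable_on_def by blast
qed



lemma alg_r0:
  fixes gm d fa c r fs l kd ch :: complex
  assumes "c \<noteq> 0" "r \<noteq> 0" "fs \<noteq> 0" "ch \<noteq> 0"
  shows "(gm * d * fa / (c * r)) * (l * kd / ch) - (d * l / (c * fs * r)) * (gm * (fs * fa) * kd / ch) = 0"
  using assms by (simp add: field_simps)

lemma alg_e:
  fixes gm d fa c r fs l kd kn ch A B :: complex
  assumes "c \<noteq> 0" "r \<noteq> 0" "fs \<noteq> 0" "ch \<noteq> 0" "gm \<noteq> 0" "d \<noteq> 0"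
  shows "A * (c / (gm * d)) * (gm * (fs * fa) * kd / ch) + B * (c / (gm * d)) * (gm * (fs * fa) * kn / ch)
       = (fa / r) * ((c * fs * r) / (d * ch) * (A * kd + B * kn))"
  using assms by (simp add: field_simps)

lemma alg_ebar:
  fixes gm d fa c r fs l kd kn ch :: complex
  assumes "c \<noteq> 0" "r \<noteq> 0" "fs \<noteq> 0" "ch \<noteq> 0" "gm \<noteq> 0" "d \<noteq> 0"
    and "ch = gm * (fs * fa) * kd + l * kn"
  shows "(c * fs * r) / (d * ch) * ((gm * d * fa / (c * r)) * kd + (d * l / (c * fs * r)) * kn) = 1"
proof -
  have "(gm * d * fa / (c * r)) * kd + (d * l / (c * fs * r)) * kn = d * ch / (c * fs * r)"
    using assms by (simp add: field_simps)
  thus ?thesis using assms(1-6) by simp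
qed

theorem theorem1:
  fixes L Gm F C D Kn Kd Fs Fa :: "real poly"
    and lam :: real and Phi :: "real \<Rightarrow> real"
  assumes L0: "coeff L 0 = 0"
    and Gm0: "coeff Gm 0 = 1" and F0: "coeff F 0 = 1"
    and C0: "coeff C 0 = 1" and D0: "coeff D 0 = 1"
    and C_stable: "stable_qpoly (cpoly C)" and D_stable: "stable_qpoly (cpoly D)"
    and F_unit: "\<forall>q\<in>qroots (cpoly F). cmod q \<noteq> 1"
    and FD_coprime: "coprime F D"
    and H_stable: "tf_stable (cpoly C) (cpoly (Gm * D))"
    and H_inv_stable: "tf_inv_stable (cpoly C) (cpoly (Gm * D))"
    and K_stab: "stabilizing L Gm F Kn Kd"
    and F_fact: "F = Fs * Fa"
    and Fs0: "coeff Fs 0 = 1" and Fa0: "coeff Fa 0 = 1"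
    and Fs_roots: "\<forall>q\<in>qroots (cpoly Fs). cmod q < 1"
    and Fa_roots: "\<forall>q\<in>qroots (cpoly Fa). cmod q > 1"
    and lam_pos: "lam > 0"
    and Phi_nonneg: "\<forall>w. Phi w \<ge> 0"
    and Phi_even: "\<forall>w. Phi (- w) = Phi w"
    and Phi_int: "Phi absolutely_integrable_on {-pi..pi}"
  shows "\<exists>abar bbar.
           arx_A abar \<and> arx_B bbar \<and>
           (\<forall>q. cmod q \<ge> 1 \<longrightarrow>
               arx_resp abar (inverse q) =
                 qeval Gm q * qeval D q / qeval C q
                 * (qeval Fa q / poly (Fa_star Fa) (inverse q)) \<and>
               arx_resp bbar (inverse q) =
                 qeval D q / qeval C q
                 * (qeval L q / (qeval Fs q * poly (Fa_star Fa) (inverse q)))) \<and>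
           (\<forall>a b. arx_A a \<and> arx_B b \<longrightarrow>
               arx_cost L Gm F C D Kn Kd lam Phi abar bbar \<le> arx_cost L Gm F C D Kn Kd lam Phi a b) \<and>
           (\<forall>w. arx_cost L Gm F C D Kn Kd lam Phi abar bbar =
               (cmod (qeval Fa (cis w) / poly (Fa_star Fa) (inverse (cis w))))\<^sup>2 * lam)"
proof -
  define pc where "pc p z = poly (cpoly p) z" for p z
  define R where "R = smult (1 / lead_coeff Fa) (reflect_poly Fa)"
  define Ch where "Ch = Gm * F * Kd + L * Kn"
  define lc where "lc = lead_coeff Fa"
  note FS = Fa_star_facts[OF Fa0 Fa_roots]
  have FsR: "\<And>z. poly (Fa_star Fa) z = pc R z" using FS(1) unfolding R_def pc_def by blast
  have Rnz: "\<And>z. cmod z \<le> 1 \<Longrightarrow> pc R z \<noteq> 0" using FS(2) FsR by metis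
  have R0: "pc R 0 = 1" using FS(3) FsR by metis
  have ratio: "\<And>z. cmod z = 1 \<Longrightarrow> cmod (pc Fa z / pc R z) = \<bar>lc\<bar>"
    using FS(4) FsR unfolding lc_def pc_def by metis
  have Cnz: "\<And>z. cmod z \<le> 1 \<Longrightarrow> pc C z \<noteq> 0" using stable_nz[OF C_stable] C0 unfolding pc_def by simp
  have Dnz: "\<And>z. cmod z \<le> 1 \<Longrightarrow> pc D z \<noteq> 0" using stable_nz[OF D_stable] D0 unfolding pc_def by simp
  have Kd0: "coeff Kd 0 \<noteq> 0" and Chst: "stable_qpoly (cpoly Ch)"
    using K_stab unfolding stabilizing_def Ch_def by auto
  have Ch0: "coeff Ch 0 = coeff Kd 0" by (simp add: Ch_def coeff_mult_0 L0 Gm0 F0)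
  have Chnz: "\<And>z. cmod z \<le> 1 \<Longrightarrow> pc Ch z \<noteq> 0" using stable_nz[OF Chst] Ch0 Kd0 unfolding pc_def by simp
  have Fsnz: "\<And>z. cmod z \<le> 1 \<Longrightarrow> pc Fs z \<noteq> 0" using roots_nz[OF Fs_roots] Fs0 unfolding pc_def by simp
  have Gmnz: "\<And>z. cmod z = 1 \<Longrightarrow> pc Gm z \<noteq> 0"
    using Gm_circle[OF H_stable] Cnz unfolding pc_def by blast
  have pcm: "\<And>p q z. pc (p * q) z = pc p z * pc q z" by (simp add: pc_def cpoly_mult)
  have pca: "\<And>p q z. pc (p + q) z = pc p z + pc q z" by (simp add: pc_def cpoly_add)
  have pc0: "\<And>p. pc p 0 = complex_of_real (coeff p 0)" by (simp add: pc_def poly_cpoly_0)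
  have Feq: "\<And>z. pc F z = pc Fs z * pc Fa z" by (simp add: F_fact pcm)
  have Cheq: "\<And>z. pc Ch z = pc Gm z * pc F z * pc Kd z + pc L z * pc Kn z" by (simp add: Ch_def pcm pca)
  have qev: "\<And>p q. qeval p q = pc p (inverse q)" by (simp add: qeval_def pc_def)
  have clc: "\<And>q. cl_char L Gm F Kn Kd q = pc Ch (inverse q)" by (simp add: cl_char_def qev Cheq)
  have QA: "\<forall>z. cmod z \<le> 1 \<longrightarrow> poly (cpoly (C * R)) z \<noteq> 0"
    using Cnz Rnz by (simp add: pc_def cpoly_mult)
  obtain abar where ab: "summable (\<lambda>k. \<bar>abar k\<bar>)"
    "\<forall>z. cmod z \<le> 1 \<longrightarrow> (\<lambda>k. complex_of_real (abar k) * z^k) sums (poly (cpoly (Gm*D*Fa)) z / poly (cpoly (C*R)) z)"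
    using rat_ps_real[OF QA, of "Gm*D*Fa"] by blast
  have abv: "\<And>z. cmod z \<le> 1 \<Longrightarrow> arx_resp abar z = pc Gm z * pc D z * pc Fa z / (pc C z * pc R z)"
    using ab(2) unfolding arx_resp_def by (simp add: sums_iff pc_def cpoly_mult)
  have "complex_of_real (abar 0) = 1" using abv[of 0] arx_resp_0[of abar] R0 by (simp add: pc0 Gm0 D0 Fa0 C0)
  hence abar0: "abar 0 = 1" by simp
  have arxA: "arx_A abar" using abar0 ab(1) unfolding arx_A_def by simp
  have QB: "\<forall>z. cmod z \<le> 1 \<longrightarrow> poly (cpoly (C * Fs * R)) z \<noteq> 0"
    using Cnz Rnz Fsnz by (simp add: pc_def cpoly_mult)
  obtain bbar where bb: "summable (\<lambda>k. \<bar>bbar k\<bar>)"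
    "\<forall>z. cmod z \<le> 1 \<longrightarrow> (\<lambda>k. complex_of_real (bbar k) * z^k) sums (poly (cpoly (D*L)) z / poly (cpoly (C*Fs*R)) z)"
    using rat_ps_real[OF QB, of "D*L"] by blast
  have bbv: "\<And>z. cmod z \<le> 1 \<Longrightarrow> arx_resp bbar z = pc D z * pc L z / (pc C z * pc Fs z * pc R z)"
    using bb(2) unfolding arx_resp_def by (simp add: sums_iff pc_def cpoly_mult)
  have "complex_of_real (bbar 0) = 0" using bbv[of 0] arx_resp_0[of bbar] by (simp add: pc0 L0)
  hence bbar0: "bbar 0 = 0" by simp
  have arxB: "arx_B bbar" using bbar0 bb(1) unfolding arx_B_def by simp
  have vals: "\<forall>q. cmod q \<ge> 1 \<longrightarrow>
               arx_resp abar (inverse q) =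
                 qeval Gm q * qeval D q / qeval C q
                 * (qeval Fa q / poly (Fa_star Fa) (inverse q)) \<and>
               arx_resp bbar (inverse q) =
                 qeval D q / qeval C q
                 * (qeval L q / (qeval Fs q * poly (Fa_star Fa) (inverse q)))"
  proof (intro allI impI conjI)
    fix q :: complex assume q: "1 \<le> cmod q"
    hence z: "cmod (inverse q) \<le> 1" by (simp add: norm_inverse inverse_le_1_iff)
    show "arx_resp abar (inverse q) = qeval Gm q * qeval D q / qeval C q * (qeval Fa q / poly (Fa_star Fa) (inverse q))"
      using abv[OF z] by (simp add: qev FsR)
    show "arx_resp bbar (inverse q) = qeval D q / qeval C q * (qeval L q / (qeval Fs q * poly (Fa_star Fa) (inverse q)))"
      using bbv[OF z] by (simp add: qev FsR)
  qed
  define Ig where "Ig a b w = (let q = cis w; A = arx_resp a (inverse q); B = arx_resp b (inverse q);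
            S = tfS L Gm F Kn Kd q; GS = tfGS L Gm F Kn Kd q;
            KS = tfKS L Gm F Kn Kd q; H = tfH C Gm D q
        in (cmod (A * GS - B * S))\<^sup>2 * Phi w + (cmod (A * H * S + B * H * KS))\<^sup>2 * lam)" for a b w
  have costI: "\<And>a b. arx_cost L Gm F C D Kn Kd lam Phi a b = 1 / (2 * pi) * integral {-pi..pi} (Ig a b)"
    unfolding arx_cost_def Ig_def by (rule refl)
  define Xf where "Xf a b z = (cmod (arx_resp a z * (pc L z * pc Kd z / pc Ch z) - arx_resp b z * (pc Gm z * (pc Fs z * pc Fa z) * pc Kd z / pc Ch z)))\<^sup>2" for a b z
  define Ef where "Ef a b z = arx_resp a z * (pc C z / (pc Gm z * pc D z)) * (pc Gm z * (pc Fs z * pc Fa z) * pc Kd z / pc Ch z) + arx_resp b z * (pc C z / (pc Gm z * pc D z)) * (pc Gm z * (pc Fs z * pc Fa z) * pc Kn z / pc Ch z)" for a b z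
  have Ig_eq: "\<And>a b w. Ig a b w = Xf a b (cis (-w)) * Phi w + (cmod (Ef a b (cis (-w))))\<^sup>2 * lam"
    unfolding Ig_def Let_def Xf_def Ef_def tfS_def tfGS_def tfKS_def tfH_def qev clc cis_inverse Feq
    by (rule refl)
  have c1: "\<And>w. cmod (cis (-w)) = 1" by simp
  have c2: "\<And>w. cmod (cis (-w)) \<le> 1" by simp
  have cont_pc: "\<And>p. continuous_on (cball 0 1) (pc p)" unfolding pc_def by (intro continuous_intros)
  have cont_arx: "\<And>a. summable (\<lambda>k. \<bar>a k\<bar>) \<Longrightarrow> continuous_on (cball 0 1) (arx_resp a)"
    by (rule psr_cont[OF psr_arx])
  have Ibar: "Ig abar bbar w = lc\<^sup>2 * lam" for w
  proof -
    let ?z = "cis (-w)"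
    have nz: "pc C ?z \<noteq> 0" "pc R ?z \<noteq> 0" "pc Fs ?z \<noteq> 0" "pc Ch ?z \<noteq> 0" "pc Gm ?z \<noteq> 0" "pc D ?z \<noteq> 0"
      using Cnz[OF c2] Rnz[OF c2] Fsnz[OF c2] Chnz[OF c2] Gmnz[OF c1] Dnz[OF c2] by auto
    have "Xf abar bbar ?z = 0"
      unfolding Xf_def abv[OF c2] bbv[OF c2] using alg_r0[OF nz(1-4)] by simp
    moreover have "Ef abar bbar ?z = (pc Fa ?z / pc R ?z) * 1"
      unfolding Ef_def alg_e[OF nz] abv[OF c2] bbv[OF c2]
      using alg_ebar[OF nz Cheq[of ?z, unfolded Feq]] by simp
    moreover have "(cmod (pc Fa ?z / pc R ?z))\<^sup>2 = lc\<^sup>2" using ratio[OF c1] by simp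
    ultimately show ?thesis unfolding Ig_eq by simp
  qed
  have int_const: "integral {-pi..pi} (\<lambda>w. lc\<^sup>2 * lam) = 2 * pi * (lc\<^sup>2 * lam)"
    by (simp add: content_real)
  have cost_bar: "arx_cost L Gm F C D Kn Kd lam Phi abar bbar = lc\<^sup>2 * lam"
  proof -
    have "Ig abar bbar = (\<lambda>w. lc\<^sup>2 * lam)" using Ibar by (simp add: fun_eq_iff)
    thus ?thesis unfolding costI int_const by simp
  qed
  have lower: "lc\<^sup>2 * lam \<le> arx_cost L Gm F C D Kn Kd lam Phi a b" if ab: "arx_A a" "arx_B b" for a b
  proof -
    have sa: "summable (\<lambda>k. \<bar>a k\<bar>)" and a0: "a 0 = 1" using ab(1) unfolding arx_A_def by auto
    have sb: "summable (\<lambda>k. \<bar>b k\<bar>)" and b0: "b 0 = 0" using ab(2) unfolding arx_B_def by auto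
    define U where "U z = pc (C * Fs * R) z / pc (D * Ch) z * (arx_resp a z * pc Kd z + arx_resp b z * pc Kn z)" for z
    have QU: "\<forall>z. cmod z \<le> 1 \<longrightarrow> poly (cpoly (D * Ch)) z \<noteq> 0"
      using Dnz Chnz by (simp add: pc_def cpoly_mult)
    have psrU: "psr U"
      unfolding U_def pc_def
      by (intro psr_mult psr_add rat_psr[OF QU] psr_arx[OF sa] psr_arx[OF sb] psr_poly)
    have U0: "U 0 = 1"
      using Kd0 unfolding U_def pcm R0 by (simp add: pc0[of C] pc0[of Fs] pc0[of D] pc0[of Ch] pc0[of Kd] pc0[of Kn] arx_resp_0 a0 b0 C0 Fs0 D0 Ch0)
    have contU: "continuous_on (cball 0 1) U" by (rule psr_cont[OF psrU])
    have Ueq: "Ig a b w = Xf a b (cis (-w)) * Phi w + lc\<^sup>2 * (cmod (U (cis (-w))))\<^sup>2 * lam" for w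
    proof -
      let ?z = "cis (-w)"
      have nz: "pc C ?z \<noteq> 0" "pc R ?z \<noteq> 0" "pc Fs ?z \<noteq> 0" "pc Ch ?z \<noteq> 0" "pc Gm ?z \<noteq> 0" "pc D ?z \<noteq> 0"
        using Cnz[OF c2] Rnz[OF c2] Fsnz[OF c2] Chnz[OF c2] Gmnz[OF c1] Dnz[OF c2] by auto
      have e: "Ef a b ?z = (pc Fa ?z / pc R ?z) * U ?z"
        unfolding Ef_def alg_e[OF nz] U_def pcm by simp
      have "cmod (Ef a b ?z) = \<bar>lc\<bar> * cmod (U ?z)" unfolding e norm_mult ratio[OF c1[of w]] ..
      hence "(cmod (Ef a b ?z))\<^sup>2 = lc\<^sup>2 * (cmod (U ?z))\<^sup>2"
        by (simp add: power_mult_distrib)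
      thus ?thesis unfolding Ig_eq by simp
    qed
    have contX: "continuous_on (cball 0 1) (Xf a b)"
      unfolding Xf_def using cont_arx[OF sa] cont_arx[OF sb] cont_pc Chnz
      by (intro continuous_intros) auto
    have i1: "(\<lambda>w. Xf a b (cis (-w)) * Phi w) integrable_on {-pi..pi}"
      by (rule prod_integrable[OF cont_on_circle[OF contX] Phi_int])
    have contU2: "continuous_on (cball 0 1) (\<lambda>z. lc\<^sup>2 * (cmod (U z))\<^sup>2 * lam)"
      using contU by (intro continuous_intros)
    have i2: "(\<lambda>w. lc\<^sup>2 * (cmod (U (cis (-w))))\<^sup>2 * lam) integrable_on {-pi..pi}"
      by (rule integrable_continuous_real[OF cont_on_circle[OF contU2]])
    have iI: "Ig a b integrable_on {-pi..pi}"
    proof -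
      have "Ig a b = (\<lambda>w. Xf a b (cis (-w)) * Phi w + lc\<^sup>2 * (cmod (U (cis (-w))))\<^sup>2 * lam)"
        using Ueq by (simp add: fun_eq_iff)
      thus ?thesis using integrable_add[OF i1 i2] by simp
    qed
    have m: "((\<lambda>w. U (cis (-w))) has_integral (2 * pi * U 0)) {-pi..pi}" by (rule psr_mean[OF psrU])
    hence "((\<lambda>w. Re (U (cis (-w)))) has_integral (2 * pi)) {-pi..pi}"
      using has_integral_Re[OF m] U0 by simp
    hence "((\<lambda>w. 2 * Re (U (cis (-w))) - 1) has_integral (2 * (2 * pi) - 2 * pi)) {-pi..pi}"
      using has_integral_diff[OF has_integral_mult_right[of _ "2 * pi" _ 2] has_integral_const_real[of "1::real" "-pi" pi]]
      by (simp add: content_real)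
    hence lb: "((\<lambda>w. lc\<^sup>2 * lam * (2 * Re (U (cis (-w))) - 1)) has_integral (lc\<^sup>2 * lam * (2 * pi))) {-pi..pi}"
      using has_integral_mult_right[of _ "2 * (2 * pi) - 2 * pi" _ "lc\<^sup>2 * lam"] by simp
    have le: "lc\<^sup>2 * lam * (2 * Re (U (cis (-w))) - 1) \<le> Ig a b w" for w
    proof -
      have "0 \<le> Xf a b (cis (-w)) * Phi w" unfolding Xf_def using Phi_nonneg by simp
      moreover have "lc\<^sup>2 * lam * (2 * Re (U (cis (-w))) - 1) \<le> lc\<^sup>2 * lam * (cmod (U (cis (-w))))\<^sup>2"
        by (rule mult_left_mono[OF cmod_sq_ge]) (use lam_pos in simp)
      ultimately show ?thesis unfolding Ueq by (simp add: algebra_simps)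
    qed
    have "lc\<^sup>2 * lam * (2 * pi) \<le> integral {-pi..pi} (Ig a b)"
      using integral_le[OF has_integral_integrable[OF lb] iI le] unfolding integral_unique[OF lb] .
    hence "lc\<^sup>2 * lam \<le> 1 / (2 * pi) * integral {-pi..pi} (Ig a b)"
      by (simp add: field_simps)
    thus ?thesis unfolding costI .
  qed
  have final: "\<forall>w. arx_cost L Gm F C D Kn Kd lam Phi abar bbar =
               (cmod (qeval Fa (cis w) / poly (Fa_star Fa) (inverse (cis w))))\<^sup>2 * lam"
  proof
    fix w
    have "cmod (qeval Fa (cis w) / poly (Fa_star Fa) (inverse (cis w))) = \<bar>lc\<bar>"
      using ratio[OF c1[of w]] by (simp add: qev FsR)
    thus "arx_cost L Gm F C D Kn Kd lam Phi abar bbar =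
               (cmod (qeval Fa (cis w) / poly (Fa_star Fa) (inverse (cis w))))\<^sup>2 * lam"
      using cost_bar by simp
  qed
  show ?thesis
    using arxA arxB vals lower cost_bar final by (intro exI[of _ abar] exI[of _ bbar]) auto
qed


end
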